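(* Suppose $\mathscr X\in\mathbb R^{I_1\times\cdots\times I_N}$ and $\pi_n$ is a permutation of $\{1,\dots,I_n\}$ for each $1\leq n\leq N$. Let $r$ be a tensor rank function. Then the tensor $\mathscr Y\in\mathbb R^{I_1\times\cdots\times I_N}$ given by $y_{i_1\cdots i_N}=x_{\pi_1(i_1)\cdots\pi_N(i_N)}$ satisfies $r(\mathscr Y)=r(\mathscr X)$.
   Context: $\mathcal T$ is the collection of all real tensors. A rank-one tensor is one of the form $x_{i_1\cdots i_N}=a^{(1)}_{i_1}\cdots a^{(N)}_{i_N}$ with all $\mathbf a^{(n)}$ nonzero vectors. $\mathscr I_{M,N}$ is the order-$N$ tensor of size $M\times\cdots\times M$ with $1$ in positions $(i,\dots,i)$ and $0$ elsewhere. The mode-$n$ product of $\mathscr X\in\mathbb R^{I_1\times\cdots\times I_N}$ with $\mathbf A\in\mathbb R^{J\times I_n}$ is $\mathscr X\times_n\mathbf A$ with entries $\sum_{i_n=1}^{I_n}x_{i_1\cdots i_N}a_{j i_n}$ at position $(i_1,\dots,i_{n-1},j,i_{n+1},\dots,i_N)$. A tensor rank function is a function $r:\mathcal T\to\mathbb N\cup\{0\}$ such that: (TR1) $r(\mathscr X)=1$ iff $\mathscr X$ is rank-one; (TR2) $r(\mathscr I_{M,N})=M$ whenever $N\ge2$; (TR3) for a matrix $\mathscr X\in\mathbb R^{I_1\times I_2}$, $r(\mathscr X)$ is its matrix rank; (TR4) if $\mathscr X\in\mathbb R^{I_1\times\cdots\times I_N}$ and $\mathscr X'$ is the corresponding tensor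 in $\mathbb R^{I_1\times\cdots\times I_N\times1}$, then $r(\mathscr X)=r(\mathscr X')$; (TR5) for $\pi\in S_N$, the tensor $\mathscr Y$ with $y_{i_1\cdots i_N}=x_{i_{\pi(1)}\cdots i_{\pi(N)}}$ satisfies $r(\mathscr Y)=r(\mathscr X)$; (TR6) $r(\mathscr X\times_n\mathbf A)\le r(\mathscr X)$ for all $\mathscr X\in\mathbb R^{I_1\times\cdots\times I_N}$, $n$, and $\mathbf A\in\mathbb R^{J\times I_n}$. *)

theory Defs
  imports Main "Jordan_Normal_Form.DL_Rank"
begin

text \<open>Tensors are pairs (dims, entries): dims is the list [I_1,...,I_N] (N >= 1, all I_n >= 1),
  entries maps index lists to reals. Indices are 0-based: i_n ranges over {0..<I_n}.
  Entries outside the index range are required to be 0 (canonical representation).\<close>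

type_synonym tensor = "nat list \<times> (nat list \<Rightarrow> real)"

definition valid_index :: "nat list \<Rightarrow> nat list \<Rightarrow> bool" where
  "valid_index d is \<longleftrightarrow> length is = length d \<and> (\<forall>k<length d. is ! k < d ! k)"

definition is_tensor :: "tensor \<Rightarrow> bool" where
  "is_tensor X \<longleftrightarrow> fst X \<noteq> [] \<and> (\<forall>k<length (fst X). 0 < fst X ! k)
     \<and> (\<forall>is. \<not> valid_index (fst X) is \<longrightarrow> snd X is = 0)"

definition rank_one :: "tensor \<Rightarrow> bool" where
  "rank_one X \<longleftrightarrow> (\<exists>a :: nat \<Rightarrow> nat \<Rightarrow> real.
     (\<forall>n<length (fst X). \<exists>i<fst X ! n. a n i \<noteq> 0) \<and>
     (\<forall>is. valid_index (fst X) is \<longrightarrow> snd X is = (\<Prod>n<length (fst X). a n (is ! n))))"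

definition diag_tensor :: "nat \<Rightarrow> nat \<Rightarrow> tensor" where
  "diag_tensor M N = (replicate N M,
     (\<lambda>is. if valid_index (replicate N M) is \<and> (\<forall>k<N. is ! k = is ! 0) then 1 else 0))"

definition matrix_rank_of :: "tensor \<Rightarrow> nat" where
  "matrix_rank_of X = vec_space.rank (fst X ! 0)
      (mat (fst X ! 0) (fst X ! 1) (\<lambda>(i, j). snd X [i, j]))"

definition add_singleton_mode :: "tensor \<Rightarrow> tensor" where
  "add_singleton_mode X = (fst X @ [1],
     (\<lambda>is. if length is = Suc (length (fst X)) \<and> last is = 0 then snd X (butlast is) else 0))"

text \<open>Mode permutation: y_{i_1..i_N} = x_{i_{pi(1)}..i_{pi(N)}} (pi a permutation of {0..<N}).
  The mode pi(k) of Y has size I_k.\<close>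
definition permute_modes :: "(nat \<Rightarrow> nat) \<Rightarrow> tensor \<Rightarrow> tensor" where
  "permute_modes \<pi> X = (let N = length (fst X);
       d' = map (\<lambda>j. fst X ! (the_inv_into {..<N} \<pi> j)) [0..<N] in
     (d', (\<lambda>is. if valid_index d' is then snd X (map (\<lambda>k. is ! (\<pi> k)) [0..<N]) else 0)))"

text \<open>Mode-n product with a J x I_n matrix A (A j i = a_{j i}); n is 0-based.\<close>
definition mode_product :: "tensor \<Rightarrow> nat \<Rightarrow> nat \<Rightarrow> (nat \<Rightarrow> nat \<Rightarrow> real) \<Rightarrow> tensor" where
  "mode_product X n J A = (let d' = (fst X)[n := J] in
     (d', (\<lambda>is. if valid_index d' is
                then (\<Sum>i<fst X ! n. snd X (is[n := i]) * A (is ! n) i) else 0)))"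

definition tensor_rank_function :: "(tensor \<Rightarrow> nat) \<Rightarrow> bool" where
  "tensor_rank_function r \<longleftrightarrow>
     (\<forall>X. is_tensor X \<longrightarrow> (r X = 1 \<longleftrightarrow> rank_one X)) \<and>
     (\<forall>M N. 1 \<le> M \<longrightarrow> 2 \<le> N \<longrightarrow> r (diag_tensor M N) = M) \<and>
     (\<forall>X. is_tensor X \<longrightarrow> length (fst X) = 2 \<longrightarrow> r X = matrix_rank_of X) \<and>
     (\<forall>X. is_tensor X \<longrightarrow> r (add_singleton_mode X) = r X) \<and>
     (\<forall>X \<pi>. is_tensor X \<longrightarrow> \<pi> permutes {..<length (fst X)} \<longrightarrow> r (permute_modes \<pi> X) = r X) \<and>
     (\<forall>X n J A. is_tensor X \<longrightarrow> n < length (fst X) \<longrightarrow> 1 \<le> J \<longrightarrow>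
        r (mode_product X n J A) \<le> r X)"

end

theory Submission
  imports Defs
begin

definition pt :: "(nat \<Rightarrow> nat \<Rightarrow> nat) \<Rightarrow> nat \<Rightarrow> tensor \<Rightarrow> tensor" where
  "pt \<sigma> m X = (fst X, (\<lambda>xs. if valid_index (fst X) xs
     then snd X (map (\<lambda>n. if n < m then \<sigma> n (xs ! n) else xs ! n) [0..<length (fst X)]) else 0))"

lemma pt_tensor: "is_tensor X \<Longrightarrow> is_tensor (pt \<sigma> m X)"
  unfolding is_tensor_def pt_def by auto

lemma pt0: "is_tensor X \<Longrightarrow> pt \<sigma> 0 X = X"
proof -
  assume X: "is_tensor X"
  have "snd (pt \<sigma> 0 X) = snd X"
  proof
    fix xs
    show "snd (pt \<sigma> 0 X) xs = snd X xs"
    proof (cases "valid_index (fst X) xs")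
      case True
      then have "map (\<lambda>n. xs ! n) [0..<length (fst X)] = xs"
        unfolding valid_index_def by (metis map_nth)
      then show ?thesis using True unfolding pt_def by simp
    next
      case False
      then show ?thesis using X unfolding pt_def is_tensor_def by simp
    qed
  qed
  moreover have "fst (pt \<sigma> 0 X) = fst X" by (simp add: pt_def)
  ultimately show ?thesis by (simp add: prod_eq_iff)
qed

lemma pt_step:
  assumes m: "m < length (fst X)" and s: "\<sigma> m permutes {..<fst X ! m}"
  shows "mode_product (pt \<sigma> m X) m (fst X ! m) (\<lambda>j i. if i = \<sigma> m j then 1 else 0)
         = pt \<sigma> (Suc m) X"
proof -
  have fstp: "fst (pt \<sigma> m X) = fst X" unfolding pt_def by simp
  have upd: "(fst X)[m := fst X ! m] = fst X" by simp
  have "snd (mode_product (pt \<sigma> m X) m (fst X ! m) (\<lambda>j i. if i = \<sigma> m j then 1 else 0))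
        = snd (pt \<sigma> (Suc m) X)"
  proof
    fix xs
    show "snd (mode_product (pt \<sigma> m X) m (fst X ! m) (\<lambda>j i. if i = \<sigma> m j then 1 else 0)) xs
        = snd (pt \<sigma> (Suc m) X) xs"
    proof (cases "valid_index (fst X) xs")
      case False
      then show ?thesis unfolding mode_product_def pt_def Let_def by simp
    next
      case True
      have len: "length xs = length (fst X)" and lt: "\<And>k. k < length (fst X) \<Longrightarrow> xs ! k < fst X ! k"
        using True unfolding valid_index_def by auto
      define j where "j = \<sigma> m (xs ! m)"
      have jlt: "j < fst X ! m" unfolding j_def using s lt[OF m]
        by (meson lessThan_iff permutes_in_image)
      define f where "f = (\<lambda>i. snd (pt \<sigma> m X) (xs[m := i]))"
      have sumj: "(\<Sum>i<fst X ! m. f i * (if i = j then 1 else 0)) = f j"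
        using jlt by (simp add: if_distrib cong: if_cong)
      have vj: "valid_index (fst X) (xs[m := j])"
        unfolding valid_index_def
      proof (intro conjI allI impI)
        show "length (xs[m := j]) = length (fst X)" using len by simp
        fix k assume k: "k < length (fst X)"
        show "xs[m := j] ! k < fst X ! k"
          using jlt lt[OF k] k len by (cases "k = m") auto
      qed
      have meq: "map (\<lambda>n. if n < m then \<sigma> n (xs[m := j] ! n) else xs[m := j] ! n) [0..<length (fst X)]
          = map (\<lambda>n. if n < Suc m then \<sigma> n (xs ! n) else xs ! n) [0..<length (fst X)]"
        using len m by (auto simp: nth_list_update j_def less_Suc_eq)
      have "snd (mode_product (pt \<sigma> m X) m (fst X ! m) (\<lambda>j i. if i = \<sigma> m j then 1 else 0)) xs
          = (\<Sum>i<fst X ! m. f i * (if i = j then 1 else 0))"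
        unfolding mode_product_def Let_def fstp upd f_def j_def using True by simp
      also have "\<dots> = f j" by (rule sumj)
      also have "\<dots> = snd X (map (\<lambda>n. if n < m then \<sigma> n (xs[m := j] ! n) else xs[m := j] ! n) [0..<length (fst X)])"
        unfolding f_def pt_def using vj by simp
      also have "\<dots> = snd (pt \<sigma> (Suc m) X) xs"
        unfolding meq pt_def using True by simp
      finally show ?thesis .
    qed
  qed
  moreover have "fst (mode_product (pt \<sigma> m X) m (fst X ! m) (\<lambda>j i. if i = \<sigma> m j then 1 else 0))
        = fst (pt \<sigma> (Suc m) X)"
    unfolding mode_product_def Let_def fstp by (simp add: pt_def)
  ultimately show ?thesis by (simp add: prod_eq_iff)
qed

lemma pt_le:
  assumes r: "tensor_rank_function r" and X: "is_tensor X"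
    and s: "\<forall>n<length (fst X). \<sigma> n permutes {..<fst X ! n}"
  shows "m \<le> length (fst X) \<Longrightarrow> r (pt \<sigma> m X) \<le> r X"
proof (induction m)
  case 0
  then show ?case using pt0[OF X] by simp
next
  case (Suc m)
  have m: "m < length (fst X)" using Suc by simp
  have T: "is_tensor (pt \<sigma> m X)" using pt_tensor[OF X] .
  have fp: "fst (pt \<sigma> m X) = fst X" by (simp add: pt_def)
  have J: "1 \<le> fst X ! m" using X m unfolding is_tensor_def by (simp add: Suc_le_eq)
  have TR6: "\<forall>X n J A. is_tensor X \<longrightarrow> n < length (fst X) \<longrightarrow> 1 \<le> J \<longrightarrow>
        r (mode_product X n J A) \<le> r X"
    using r unfolding tensor_rank_function_def by blast
  have "r (mode_product (pt \<sigma> m X) m (fst X ! m) (\<lambda>j i. if i = \<sigma> m j then 1 else 0)) \<le> r (pt \<sigma> m X)"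
    using TR6 T m J fp by metis
  moreover have "mode_product (pt \<sigma> m X) m (fst X ! m) (\<lambda>j i. if i = \<sigma> m j then 1 else 0) = pt \<sigma> (Suc m) X"
    using pt_step[OF m] s m by blast
  moreover have "r (pt \<sigma> m X) \<le> r X" using Suc.IH m by simp
  ultimately show ?case by simp
qed

lemma pt_full: "pt \<sigma> (length (fst X)) X = (fst X, (\<lambda>xs. if valid_index (fst X) xs
                          then snd X (map (\<lambda>n. \<sigma> n (xs ! n)) [0..<length (fst X)]) else 0))"
proof -
  have "\<And>xs. map (\<lambda>n. if n < length (fst X) then \<sigma> n (xs ! n) else xs ! n) [0..<length (fst X)]
     = map (\<lambda>n. \<sigma> n (xs ! n)) [0..<length (fst X)]"
    by (rule map_cong) auto
  then show ?thesis unfolding pt_def by (simp only:)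
qed

theorem proposition4p4:
  fixes r :: "tensor \<Rightarrow> nat" and X :: tensor and \<sigma> :: "nat \<Rightarrow> nat \<Rightarrow> nat"
  assumes "tensor_rank_function r"
    and "is_tensor X"
    and "\<forall>n<length (fst X). \<sigma> n permutes {..<fst X ! n}"
  shows "r (fst X, (\<lambda>is. if valid_index (fst X) is
                          then snd X (map (\<lambda>n. \<sigma> n (is ! n)) [0..<length (fst X)]) else 0))
         = r X"
proof -
  define Y where "Y = pt \<sigma> (length (fst X)) X"
  have le1: "r Y \<le> r X" unfolding Y_def using pt_le[OF assms] by simp
  have TY: "is_tensor Y" unfolding Y_def using pt_tensor[OF assms(2)] .
  have fY: "fst Y = fst X" unfolding Y_def pt_def by simp
  define tt where "tt = (\<lambda>n. inv_into UNIV (\<sigma> n))"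
  have st: "\<forall>n<length (fst Y). tt n permutes {..<fst Y ! n}"
    using assms(3) fY unfolding tt_def by (simp add: permutes_inv)
  have le2: "r (pt tt (length (fst Y)) Y) \<le> r Y" using pt_le[OF assms(1) TY st] by simp
  have "pt tt (length (fst Y)) Y = X"
  proof -
    have "snd (pt tt (length (fst Y)) Y) = snd X"
    proof
      fix xs
      show "snd (pt tt (length (fst Y)) Y) xs = snd X xs"
      proof (cases "valid_index (fst X) xs")
        case False
        then show ?thesis using assms(2) fY unfolding pt_def is_tensor_def by simp
      next
        case True
        have len: "length xs = length (fst X)" and lt: "\<And>k. k < length (fst X) \<Longrightarrow> xs ! k < fst X ! k"
          using True unfolding valid_index_def by auto
        have lt2: "\<And>k. k < length (fst X) \<Longrightarrow> tt k (xs ! k) < fst X ! k"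
          proof -
          fix k assume k: "k < length (fst X)"
          have "tt k permutes {..<fst X ! k}" using st fY k by simp
          then show "tt k (xs ! k) < fst X ! k" using lt[OF k] by (meson lessThan_iff permutes_in_image)
        qed
        have v: "valid_index (fst X) (map (\<lambda>n. tt n (xs ! n)) [0..<length (fst X)])"
          unfolding valid_index_def using lt2 by simp
        have "map (\<lambda>n. \<sigma> n (map (\<lambda>n. tt n (xs ! n)) [0..<length (fst X)] ! n)) [0..<length (fst X)] = xs"
        proof (rule nth_equalityI)
          show "length (map (\<lambda>n. \<sigma> n (map (\<lambda>n. tt n (xs ! n)) [0..<length (fst X)] ! n)) [0..<length (fst X)]) = length xs"
            using len by simp
          fix i assume "i < length (map (\<lambda>n. \<sigma> n (map (\<lambda>n. tt n (xs ! n)) [0..<length (fst X)] ! n)) [0..<length (fst X)])"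
          then have i: "i < length (fst X)" by simp
          have "\<sigma> i (tt i (xs ! i)) = xs ! i"
            unfolding tt_def using assms(3) i by (meson permutes_inverses(1))
          then show "map (\<lambda>n. \<sigma> n (map (\<lambda>n. tt n (xs ! n)) [0..<length (fst X)] ! n)) [0..<length (fst X)] ! i = xs ! i"
            using i by simp
        qed
        then have e: "snd X (map (\<lambda>n. \<sigma> n (map (\<lambda>n. tt n (xs ! n)) [0..<length (fst X)] ! n)) [0..<length (fst X)]) = snd X xs"
          by simp
        have "snd (pt tt (length (fst Y)) Y) xs = snd Y (map (\<lambda>n. tt n (xs ! n)) [0..<length (fst X)])"
          unfolding pt_full[of tt Y] using True fY by simp
        also have "\<dots> = snd X (map (\<lambda>n. \<sigma> n (map (\<lambda>n. tt n (xs ! n)) [0..<length (fst X)] ! n)) [0..<length (fst X)])"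
          using v unfolding Y_def pt_full by simp
        finally show ?thesis using e by simp
      qed
    qed
    then show ?thesis using fY unfolding pt_def by (simp add: prod_eq_iff)
  qed
  then have "r X \<le> r Y" using le2 by simp
  then show ?thesis using le1 pt_full Y_def by simp
qed

end
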